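(* Let $A\subset\mathbb{R}$, let $f_1,f_2:A\to\mathbb{R}$ be functions and let $a,\lambda,L_1,L_2\in\mathbb{R}$. Suppose $T_5\lim_{x\to a}f_1(x)=L_1$ and $T_5\lim_{x\to a}f_2(x)=L_2$. Then: 1. $T_5\lim_{x\to a}\left(f_1(x)+f_2(x)\right)=L_1+L_2$; 2. $T_5\lim_{x\to a}\left(f_1(x)f_2(x)\right)=L_1L_2$; 3. if $L_2\neq0$, then $T_5\lim_{x\to a}\frac{f_1(x)}{f_2(x)}=\frac{L_1}{L_2}$, where $f_1/f_2$ is considered on the set $\{x\in A: f_2(x)\neq0\}$; 4. $T_5\lim_{x\to a}\left(\lambda f_1(x)\right)=\lambda L_1$.
   Context: For $B\subset\mathbb{R}$, $f:B\to\mathbb{R}$ and $a,L\in\mathbb{R}$, $T_5\lim_{x\to a}f(x)=L$ means: for every real $\varepsilon>0$ there exists a real $\delta_\varepsilon>0$ such that the set $\left\{x\in\left((a-\delta_{\varepsilon},a+\delta_{\varepsilon})\setminus\{a\}\right)\cap B:\ |f(x)-L|\geq\varepsilon\right\}$ is countable (finite or countably infinite). *)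

theory Defs
  imports "HOL-Analysis.Analysis"
begin

text \<open>A function B -> R is modelled as a total function real => real whose values outside B
  are irrelevant.\<close>
definition T5lim :: "real set \<Rightarrow> (real \<Rightarrow> real) \<Rightarrow> real \<Rightarrow> real \<Rightarrow> bool" where
  "T5lim B f a L \<longleftrightarrow>
     (\<forall>\<epsilon>>0. \<exists>\<delta>>0. countable {x \<in> ({a - \<delta> <..< a + \<delta>} - {a}) \<inter> B. \<bar>f x - L\<bar> \<ge> \<epsilon>})"

end

theory Submission
  imports Defs
begin

lemma T5_combine:
  assumes h1: "T5lim A f1 a L1" and h2: "T5lim A f2 a L2" and sub: "B \<subseteq> A"
    and key: "\<And>e. e > 0 \<Longrightarrow> \<exists>e1>0. \<exists>e2>0. \<forall>x\<in>B. \<bar>f1 x - L1\<bar> < e1 \<and> \<bar>f2 x - L2\<bar> < e2 \<longrightarrow> \<bar>g x - M\<bar> < e"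
  shows "T5lim B g a M"
  unfolding T5lim_def
proof (intro allI impI)
  fix e :: real assume "e > 0"
  then obtain e1 e2 where e1: "e1 > 0" and e2: "e2 > 0" and
    K: "\<forall>x\<in>B. \<bar>f1 x - L1\<bar> < e1 \<and> \<bar>f2 x - L2\<bar> < e2 \<longrightarrow> \<bar>g x - M\<bar> < e"
    using key by blast
  obtain d1 where d1: "d1 > 0" "countable {x \<in> ({a - d1 <..< a + d1} - {a}) \<inter> A. \<bar>f1 x - L1\<bar> \<ge> e1}"
    using h1 e1 unfolding T5lim_def by blast
  obtain d2 where d2: "d2 > 0" "countable {x \<in> ({a - d2 <..< a + d2} - {a}) \<inter> A. \<bar>f2 x - L2\<bar> \<ge> e2}"
    using h2 e2 unfolding T5lim_def by blast
  let ?d = "min d1 d2"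
  have "{x \<in> ({a - ?d <..< a + ?d} - {a}) \<inter> B. \<bar>g x - M\<bar> \<ge> e} \<subseteq>
      {x \<in> ({a - d1 <..< a + d1} - {a}) \<inter> A. \<bar>f1 x - L1\<bar> \<ge> e1} \<union>
      {x \<in> ({a - d2 <..< a + d2} - {a}) \<inter> A. \<bar>f2 x - L2\<bar> \<ge> e2}"
    using K sub by fastforce
  moreover have "countable ({x \<in> ({a - d1 <..< a + d1} - {a}) \<inter> A. \<bar>f1 x - L1\<bar> \<ge> e1} \<union>
      {x \<in> ({a - d2 <..< a + d2} - {a}) \<inter> A. \<bar>f2 x - L2\<bar> \<ge> e2})"
    using d1 d2 by simp
  ultimately have "countable {x \<in> ({a - ?d <..< a + ?d} - {a}) \<inter> B. \<bar>g x - M\<bar> \<ge> e}"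
    using countable_subset by blast
  then show "\<exists>\<delta>>0. countable {x \<in> ({a - \<delta> <..< a + \<delta>} - {a}) \<inter> B. \<bar>g x - M\<bar> \<ge> e}"
    using d1 d2 by (intro exI[of _ ?d]) auto
qed

lemma T5_mono:
  assumes "T5lim A f a L" "B \<subseteq> A" shows "T5lim B f a L"
  using T5_combine[OF assms(1) assms(1) assms(2), of f L]
  by (metis zero_less_one)

lemma T5_mult:
  assumes h1: "T5lim A f1 a L1" and h2: "T5lim A f2 a L2"
  shows "T5lim A (\<lambda>x. f1 x * f2 x) a (L1 * L2)"
proof (rule T5_combine[OF h1 h2 order_refl])
  fix e :: real assume e: "e > 0"
  define e1 where "e1 = min 1 (e / (2 * (\<bar>L2\<bar> + 1)))"
  define e2 where "e2 = e / (2 * (\<bar>L1\<bar> + 1))"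
  have e1p: "e1 > 0" using e by (simp add: e1_def add_pos_nonneg)
  have e2p: "e2 > 0" using e by (simp add: e2_def add_pos_nonneg)
  have "\<forall>x\<in>A. \<bar>f1 x - L1\<bar> < e1 \<and> \<bar>f2 x - L2\<bar> < e2 \<longrightarrow> \<bar>f1 x * f2 x - L1 * L2\<bar> < e"
  proof (intro ballI impI)
    fix x assume "x \<in> A" and H: "\<bar>f1 x - L1\<bar> < e1 \<and> \<bar>f2 x - L2\<bar> < e2"
    have a1: "\<bar>f1 x\<bar> \<le> \<bar>L1\<bar> + 1" using H unfolding e1_def by linarith
    have "\<bar>f1 x * f2 x - L1 * L2\<bar> = \<bar>f1 x * (f2 x - L2) + L2 * (f1 x - L1)\<bar>"
      by (simp add: algebra_simps)
    also have "\<dots> \<le> \<bar>f1 x\<bar> * \<bar>f2 x - L2\<bar> + \<bar>L2\<bar> * \<bar>f1 x - L1\<bar>"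
      by (metis abs_mult abs_triangle_ineq)
    also have "\<dots> \<le> (\<bar>L1\<bar> + 1) * e2 + \<bar>L2\<bar> * e1"
      using H a1 by (intro add_mono mult_mono) auto
    also have "(\<bar>L1\<bar> + 1) * e2 = e / 2" unfolding e2_def
      by (simp add: field_simps add_pos_nonneg)
    also have "\<bar>L2\<bar> * e1 < e / 2"
    proof -
      have "\<bar>L2\<bar> * e1 \<le> \<bar>L2\<bar> * (e / (2 * (\<bar>L2\<bar> + 1)))"
        unfolding e1_def by (intro mult_left_mono) auto
      also have "\<dots> < e / 2" using e
        by (simp add: field_simps add_pos_nonneg)
      finally show ?thesis .
    qed
    finally show "\<bar>f1 x * f2 x - L1 * L2\<bar> < e" by simp
  qed
  then show "\<exists>e1>0. \<exists>e2>0. \<forall>x\<in>A. \<bar>f1 x - L1\<bar> < e1 \<and> \<bar>f2 x - L2\<bar> < e2 \<longrightarrow>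
      \<bar>f1 x * f2 x - L1 * L2\<bar> < e" using e1p e2p by blast
qed

lemma T5_inv:
  assumes h2: "T5lim A f2 a L2" and L: "L2 \<noteq> 0"
  shows "T5lim {x \<in> A. f2 x \<noteq> 0} (\<lambda>x. 1 / f2 x) a (1 / L2)"
proof (rule T5_combine[OF h2 h2])
  show "{x \<in> A. f2 x \<noteq> 0} \<subseteq> A" by auto
  fix e :: real assume e: "e > 0"
  define e2 where "e2 = min (\<bar>L2\<bar> / 2) (e * L2\<^sup>2 / 2)"
  have e2p: "e2 > 0" using e L by (simp add: e2_def)
  have "\<forall>x\<in>{x \<in> A. f2 x \<noteq> 0}. \<bar>f2 x - L2\<bar> < e2 \<and> \<bar>f2 x - L2\<bar> < e2 \<longrightarrow> \<bar>1 / f2 x - 1 / L2\<bar> < e"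
  proof (intro ballI impI)
    fix x assume x: "x \<in> {x \<in> A. f2 x \<noteq> 0}" and H: "\<bar>f2 x - L2\<bar> < e2 \<and> \<bar>f2 x - L2\<bar> < e2"
    have nz: "f2 x \<noteq> 0" using x by auto
    have y: "\<bar>f2 x\<bar> \<ge> \<bar>L2\<bar> / 2" using H unfolding e2_def by linarith
    have "1 / f2 x - 1 / L2 = (L2 - f2 x) / (f2 x * L2)"
      using nz L by (simp add: field_simps)
    then have "\<bar>1 / f2 x - 1 / L2\<bar> = \<bar>f2 x - L2\<bar> / (\<bar>f2 x\<bar> * \<bar>L2\<bar>)"
      by (simp add: abs_mult abs_minus_commute)
    also have "\<dots> \<le> \<bar>f2 x - L2\<bar> / (\<bar>L2\<bar> / 2 * \<bar>L2\<bar>)"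
    proof (rule divide_left_mono)
      show "\<bar>L2\<bar> / 2 * \<bar>L2\<bar> \<le> \<bar>f2 x\<bar> * \<bar>L2\<bar>" using y by (intro mult_right_mono) auto
      show "0 < \<bar>f2 x\<bar> * \<bar>L2\<bar> * (\<bar>L2\<bar> / 2 * \<bar>L2\<bar>)" using L nz by (simp add: mult_pos_pos zero_less_mult_iff linorder_neq_iff) blast
    qed simp
    also have "\<dots> < e2 / (\<bar>L2\<bar> / 2 * \<bar>L2\<bar>)"
      using H L by (intro divide_strict_right_mono) (auto simp: zero_less_mult_iff linorder_neq_iff)
    also have "\<dots> \<le> (e * L2\<^sup>2 / 2) / (\<bar>L2\<bar> / 2 * \<bar>L2\<bar>)"
      using L unfolding e2_def by (intro divide_right_mono) auto
    also have "\<dots> = e" using L by (simp add: field_simps power2_eq_square abs_mult_self_eq flip: abs_mult)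
    finally show "\<bar>1 / f2 x - 1 / L2\<bar> < e" .
  qed
  then show "\<exists>e1>0. \<exists>e2>0. \<forall>x\<in>{x \<in> A. f2 x \<noteq> 0}. \<bar>f2 x - L2\<bar> < e1 \<and> \<bar>f2 x - L2\<bar> < e2 \<longrightarrow>
      \<bar>1 / f2 x - 1 / L2\<bar> < e" using e2p by blast
qed

lemma T5_const: "T5lim A (\<lambda>x. c) a c"
  unfolding T5lim_def by (auto intro: exI[of _ 1])

theorem theorem4:
  fixes A :: "real set" and f1 f2 :: "real \<Rightarrow> real" and a lam L1 L2 :: real
  assumes "T5lim A f1 a L1" and "T5lim A f2 a L2"
  shows "T5lim A (\<lambda>x. f1 x + f2 x) a (L1 + L2)
    \<and> T5lim A (\<lambda>x. f1 x * f2 x) a (L1 * L2)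
    \<and> (L2 \<noteq> 0 \<longrightarrow> T5lim {x \<in> A. f2 x \<noteq> 0} (\<lambda>x. f1 x / f2 x) a (L1 / L2))
    \<and> T5lim A (\<lambda>x. lam * f1 x) a (lam * L1)"
proof (intro conjI impI)
  show "T5lim A (\<lambda>x. f1 x + f2 x) a (L1 + L2)"
  proof (rule T5_combine[OF assms order_refl])
    fix e :: real assume "e > 0"
    then show "\<exists>e1>0. \<exists>e2>0. \<forall>x\<in>A. \<bar>f1 x - L1\<bar> < e1 \<and> \<bar>f2 x - L2\<bar> < e2 \<longrightarrow>
      \<bar>f1 x + f2 x - (L1 + L2)\<bar> < e"
      by (intro exI[of _ "e/2"] conjI) (auto simp: abs_if split: if_splits)
  qed
  show "T5lim A (\<lambda>x. f1 x * f2 x) a (L1 * L2)" by (rule T5_mult[OF assms])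
  show "T5lim A (\<lambda>x. lam * f1 x) a (lam * L1)"
    using T5_mult[OF T5_const[of A lam a] assms(1)] .
  assume L: "L2 \<noteq> 0"
  have "T5lim {x \<in> A. f2 x \<noteq> 0} (\<lambda>x. f1 x * (1 / f2 x)) a (L1 * (1 / L2))"
    by (rule T5_mult[OF T5_mono[OF assms(1)] T5_inv[OF assms(2) L]]) auto
  then show "T5lim {x \<in> A. f2 x \<noteq> 0} (\<lambda>x. f1 x / f2 x) a (L1 / L2)" by simp
qed

end
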